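(* Let $\tilde{\mathbf{M}}$ be a real $n\times n$ skew-symmetric matrix. Then the optimization problem $\min_{\mathbf{M}\in\mathcal{M}_T(n)}\|\tilde{\mathbf{M}}-\mathbf{M}\|_F^2$ has the closed-form solution $\mathbf{M}^\ast=(\tilde{\mathbf{M}}\mathds{1}+\mathds{1}\tilde{\mathbf{M}})/n$.
   Context: $\mathds{1}$ is the $n\times n$ all-ones matrix; $\|\cdot\|_F$ is the Frobenius norm. A TDOA matrix is an $n\times n$ real matrix whose $(i,j)$ entry is $\tau_i-\tau_j$ for some $(\tau_1,\dots,\tau_n)\in\mathbb{R}^n$; $\mathcal{M}_T(n)$ is the set of all $n\times n$ TDOA matrices. In the paper $\tilde{\mathbf{M}}$ is a measured TDOA matrix, $\tilde{\mathbf{M}}=\mathbf{M}+\mathbf{N}$ with $\mathbf{M}\in\mathcal{M}_T(n)$ and $\mathbf{N}$ a skew-symmetric noise matrix, hence skew-symmetric. *)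

theory Defs
  imports "HOL-Analysis.Analysis"
begin

text \<open>n x n real matrices are rendered as real^'n^'n, with n = CARD('n).\<close>

definition ones_mat :: "real^'n^'n" where
  "ones_mat = (\<chi> i j. 1)"

definition skew_symmetric :: "real^'n^'n \<Rightarrow> bool" where
  "skew_symmetric A \<longleftrightarrow> transpose A = - A"

definition tdoa_matrices :: "(real^'n^'n) set" where
  "tdoa_matrices = {M. \<exists>\<tau>::real^'n. \<forall>i j. M $ i $ j = \<tau> $ i - \<tau> $ j}"

definition frob_norm :: "real^'n^'n \<Rightarrow> real" where
  "frob_norm A = sqrt (\<Sum>i\<in>UNIV. \<Sum>j\<in>UNIV. (A $ i $ j)^2)"

end

theory Submission
  imports Defs
begin

lemma frob_sq: "(frob_norm A)^2 = (\<Sum>i\<in>UNIV. \<Sum>j\<in>UNIV. (A $ i $ j)^2)"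
  unfolding frob_norm_def by (simp add: sum_nonneg)

theorem theorem3:
  fixes Mt :: "real^'n^'n"
  assumes "skew_symmetric Mt"
  shows "(1 / real CARD('n)) *\<^sub>R (Mt ** ones_mat + ones_mat ** Mt) \<in> tdoa_matrices
       \<and> (\<forall>M \<in> tdoa_matrices.
            (frob_norm (Mt - (1 / real CARD('n)) *\<^sub>R (Mt ** ones_mat + ones_mat ** Mt)))^2
              \<le> (frob_norm (Mt - M))^2)"
proof -
  define n where "n = real CARD('n)"
  have npos: "n > 0" unfolding n_def by simp
  define r where "r = (\<lambda>i. \<Sum>k\<in>UNIV. Mt $ i $ k)"
  have sk: "\<And>i j. Mt $ i $ j = - Mt $ j $ i"
  proof -
    fix i j
    have "transpose Mt $ j $ i = (- Mt) $ j $ i" using assms unfolding skew_symmetric_def by simp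
    then show "Mt $ i $ j = - Mt $ j $ i" by (simp add: transpose_def)
  qed
  have col: "\<And>j. (\<Sum>k\<in>UNIV. Mt $ k $ j) = - r j"
    unfolding r_def by (subst sk) (simp add: sum_negf)
  have tot: "(\<Sum>i\<in>UNIV. r i) = 0"
  proof -
    have "(\<Sum>i\<in>UNIV. r i) = (\<Sum>j\<in>UNIV. \<Sum>i\<in>UNIV. Mt $ i $ j)"
      unfolding r_def by (rule sum.swap)
    also have "\<dots> = - (\<Sum>i\<in>UNIV. r i)" using col by (simp add: sum_negf)
    finally show ?thesis by simp
  qed
  define Ms where "Ms = (1 / real CARD('n)) *\<^sub>R (Mt ** ones_mat + ones_mat ** Mt)"
  have Ms_e: "\<And>i j. Ms $ i $ j = r i / n - r j / n"
    unfolding Ms_def n_def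
    using col by (simp add: matrix_matrix_mult_def ones_mat_def r_def diff_divide_distrib)
  have mem: "Ms \<in> tdoa_matrices"
    unfolding tdoa_matrices_def using Ms_e by (intro CollectI exI[of _ "\<chi> i. r i / n"]) simp
  define E where "E = (\<lambda>i j. Mt $ i $ j - Ms $ i $ j)"
  have rowE: "\<And>i. (\<Sum>j\<in>UNIV. E i j) = 0"
  proof -
    fix i
    have "(\<Sum>j\<in>UNIV. E i j) = r i - (\<Sum>j\<in>(UNIV::'n set). r i / n) + (\<Sum>j\<in>UNIV. r j) / n"
      unfolding E_def Ms_e r_def by (simp add: sum_subtractf sum_divide_distrib del: sum_constant)
    also have "\<dots> = 0" using tot npos unfolding n_def by simp
    finally show "(\<Sum>j\<in>UNIV. E i j) = 0" .
  qed
  have colE: "\<And>j. (\<Sum>i\<in>UNIV. E i j) = 0"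
  proof -
    fix j
    have "(\<Sum>i\<in>UNIV. E i j) = (\<Sum>i\<in>UNIV. Mt $ i $ j) - (\<Sum>i\<in>UNIV. r i) / n + (\<Sum>i\<in>(UNIV::'n set). r j / n)"
      unfolding E_def Ms_e by (simp add: sum_subtractf sum_divide_distrib del: sum_constant)
    also have "\<dots> = 0" using tot npos col[of j] unfolding n_def by simp
    finally show "(\<Sum>i\<in>UNIV. E i j) = 0" .
  qed
  have opt: "(frob_norm (Mt - Ms))^2 \<le> (frob_norm (Mt - M))^2" if Mmem: "M \<in> tdoa_matrices" for M
  proof -
    obtain t :: "real^'n" where t: "\<And>i j. M $ i $ j = t $ i - t $ j"
      using Mmem unfolding tdoa_matrices_def by blast
    define s where "s = (\<lambda>i. r i / n - t $ i)"
    have dec: "\<And>i j. (Mt - M) $ i $ j = E i j + (s i - s j)"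
      unfolding E_def s_def using Ms_e t by simp
    have cross: "(\<Sum>i\<in>UNIV. \<Sum>j\<in>UNIV. E i j * (s i - s j)) = 0"
    proof -
      have "(\<Sum>i\<in>UNIV. \<Sum>j\<in>UNIV. E i j * (s i - s j))
          = (\<Sum>i\<in>UNIV. s i * (\<Sum>j\<in>UNIV. E i j)) - (\<Sum>i\<in>UNIV. \<Sum>j\<in>UNIV. E i j * s j)"
        by (simp add: algebra_simps sum_subtractf sum_distrib_left)
      also have "(\<Sum>i\<in>UNIV. \<Sum>j\<in>UNIV. E i j * s j) = (\<Sum>j\<in>UNIV. s j * (\<Sum>i\<in>UNIV. E i j))"
        by (subst sum.swap) (simp add: sum_distrib_left mult.commute)
      finally show ?thesis using rowE colE by simp
    qed
    have "(frob_norm (Mt - M))^2 = (\<Sum>i\<in>UNIV. \<Sum>j\<in>UNIV. (E i j)^2 + 2 * (E i j * (s i - s j)) + (s i - s j)^2)"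
      unfolding frob_sq dec by (simp add: power2_eq_square algebra_simps)
    also have "\<dots> = (\<Sum>i\<in>UNIV. \<Sum>j\<in>UNIV. (E i j)^2) + 2 * (\<Sum>i\<in>UNIV. \<Sum>j\<in>UNIV. E i j * (s i - s j)) + (\<Sum>i\<in>UNIV. \<Sum>j\<in>UNIV. (s i - s j)^2)"
      by (simp add: sum.distrib sum_distrib_left)
    also have "\<dots> \<ge> (\<Sum>i\<in>UNIV. \<Sum>j\<in>UNIV. (E i j)^2)"
      using cross by (simp add: sum_nonneg)
    finally show ?thesis unfolding frob_sq E_def by simp
  qed
  show ?thesis using mem opt unfolding Ms_def by blast
qed

end
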